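(* Let $G$, $\mathcal{G}$, the upper layer $l$, the class $i$ and the helper graph $\mathcal{H}_i$ be as in the context, and suppose every virtual node of layer $l$ knows the class and component identifier of each of its old neighbors. Then, in the V-CONGEST model on $G$, where each real node simulates its two virtual copies on layer $l$, the helper graph $\mathcal{H}_i$ can be constructed in $O(\Delta)$ rounds by the following protocol: every type-2 node $v$ that adds a node $v_{\mathcal{C}}$ sends the class $i$ and the identifier of $\mathcal{C}$ to its type-1 neighbors; every type-1 node $w$ receiving such a message checks whether it has no neighbor in $\mathcal{C}$ and a neighbor in another component of class $i$, and if so adds $w_{\mathcal{C}}$ and the edge $\{v_{\mathcal{C}},w_{\mathcal{C}}\}$ and responds to that message.
   Context: $G=(V,E)$ is a finite undirected graph on $n$ nodes with maximum degree $\Delta$. Fix an integer $L$. The virtual graph $\mathcal{G}$ contains $3L$ copies of each $v\in V$: each lower layer $1,\dots,L$ contains one copy of every node; each upper layer $L+1,\dots,2L$ contains a type-1 copy and a type-2 copy of every node. Every copy of $v$ is adjacent to all other copies of $v$ and to all copies of each neighbor of $v$ in $G$. $\Psi$ maps virtual nodes to the corresponding real nodes. There are classes $1,\dots,t$. For a fixed upper layer $l$, the nodes of layers $1,\dots,l-1$ are old nodes, each assigned a class; a component of class $i$ is a connected component of the subgraph of $\mathcal{G}$ induced by the old nodes of class $i$. The helper graph $\mathcal{H}_i[\mathcal{C}]$ for a component $\mathcal{C}$ of class $i$: for each type-2 node $v$ of layer $l$, a node $v_{\mathcal{C}}$ is added iff $\Psi(v)\notin\Psi(\mathcal{C})$,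 $v$ has a neighbor in $\mathcal{C}$, and $v$ has no neighbor in another component of class $i$; for each such $v_{\mathcal{C}}$ and each type-1 neighbor $w$ of $v$ on layer $l$ that has a neighbor in some component $\mathcal{C}'\neq\mathcal{C}$ of class $i$ but no neighbor in $\mathcal{C}$, a node $w_{\mathcal{C}}$ and edge $\{v_{\mathcal{C}},w_{\mathcal{C}}\}$ are added. $\mathcal{H}_i$ is the disjoint union of all $\mathcal{H}_i[\mathcal{C}]$. V-CONGEST model: synchronous rounds in which each node may send one identical message of $O(\log n)$ bits to all its neighbors in $G$. *)

theory Defs
  imports Main
begin

text \<open>A virtual node is a triple (v, j, k): real node v, layer j, type k.
  Lower layers 1..L carry one copy of type 0; upper layers L+1..2L carry a
  type-1 and a type-2 copy.\<close>

type_synonym 'v vnode = "'v \<times> nat \<times> nat"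

definition Psi :: "'v vnode \<Rightarrow> 'v" where "Psi x = fst x"
definition layer :: "'v vnode \<Rightarrow> nat" where "layer x = fst (snd x)"
definition vtype :: "'v vnode \<Rightarrow> nat" where "vtype x = snd (snd x)"

definition vnodes :: "'v set \<Rightarrow> nat \<Rightarrow> 'v vnode set" where
  "vnodes V L =
     {(v, j, 0) | v j. v \<in> V \<and> 1 \<le> j \<and> j \<le> L} \<union>
     {(v, j, k) | v j k. v \<in> V \<and> L < j \<and> j \<le> 2 * L \<and> k \<in> {1, 2}}"

definition vadj :: "('v \<Rightarrow> 'v \<Rightarrow> bool) \<Rightarrow> 'v vnode \<Rightarrow> 'v vnode \<Rightarrow> bool" where
  "vadj E x y \<longleftrightarrow> x \<noteq> y \<and> (Psi x = Psi y \<or> E (Psi x) (Psi y))"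

definition old :: "'v set \<Rightarrow> nat \<Rightarrow> nat \<Rightarrow> 'v vnode set" where
  "old V L l = {x \<in> vnodes V L. layer x < l}"

definition class_set ::
  "'v set \<Rightarrow> nat \<Rightarrow> nat \<Rightarrow> ('v vnode \<Rightarrow> nat) \<Rightarrow> nat \<Rightarrow> 'v vnode set" where
  "class_set V L l cls i = {x \<in> old V L l. cls x = i}"

definition comp_in ::
  "('v \<Rightarrow> 'v \<Rightarrow> bool) \<Rightarrow> 'v vnode set \<Rightarrow> 'v vnode \<Rightarrow> 'v vnode set" where
  "comp_in E S x = {y. (x, y) \<in> {(a, b). a \<in> S \<and> b \<in> S \<and> vadj E a b}\<^sup>*}"

definition components ::
  "'v set \<Rightarrow> ('v \<Rightarrow> 'v \<Rightarrow> bool) \<Rightarrow> nat \<Rightarrow> nat \<Rightarrow> ('v vnode \<Rightarrow> nat) \<Rightarrow> nat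
     \<Rightarrow> 'v vnode set set" where
  "components V E L l cls i =
     (\<lambda>x. comp_in E (class_set V L l cls i) x) ` class_set V L l cls i"

definition adj_to :: "('v \<Rightarrow> 'v \<Rightarrow> bool) \<Rightarrow> 'v vnode \<Rightarrow> 'v vnode set \<Rightarrow> bool" where
  "adj_to E x C \<longleftrightarrow> (\<exists>u\<in>C. vadj E x u)"

definition hv2 ::
  "'v set \<Rightarrow> ('v \<Rightarrow> 'v \<Rightarrow> bool) \<Rightarrow> nat \<Rightarrow> nat \<Rightarrow> ('v vnode \<Rightarrow> nat) \<Rightarrow> nat
     \<Rightarrow> 'v vnode set \<Rightarrow> 'v vnode \<Rightarrow> bool" where
  "hv2 V E L l cls i C v \<longleftrightarrow>
     v \<in> vnodes V L \<and> layer v = l \<and> vtype v = 2 \<and>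
     Psi v \<notin> Psi ` C \<and> adj_to E v C \<and>
     \<not> (\<exists>C' \<in> components V E L l cls i. C' \<noteq> C \<and> adj_to E v C')"

definition hedge ::
  "'v set \<Rightarrow> ('v \<Rightarrow> 'v \<Rightarrow> bool) \<Rightarrow> nat \<Rightarrow> nat \<Rightarrow> ('v vnode \<Rightarrow> nat) \<Rightarrow> nat
     \<Rightarrow> 'v vnode set \<Rightarrow> 'v vnode \<Rightarrow> 'v vnode \<Rightarrow> bool" where
  "hedge V E L l cls i C v w \<longleftrightarrow>
     hv2 V E L l cls i C v \<and>
     w \<in> vnodes V L \<and> layer w = l \<and> vtype w = 1 \<and> vadj E v w \<and>
     (\<exists>C' \<in> components V E L l cls i. C' \<noteq> C \<and> adj_to E w C') \<and>
     \<not> adj_to E w C"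

definition hv1 ::
  "'v set \<Rightarrow> ('v \<Rightarrow> 'v \<Rightarrow> bool) \<Rightarrow> nat \<Rightarrow> nat \<Rightarrow> ('v vnode \<Rightarrow> nat) \<Rightarrow> nat
     \<Rightarrow> 'v vnode set \<Rightarrow> 'v vnode \<Rightarrow> bool" where
  "hv1 V E L l cls i C w \<longleftrightarrow> (\<exists>v. hedge V E L l cls i C v w)"

text \<open>H_i is the disjoint union of the H_i[C]; a helper node x_C is encoded
  as the pair (x, C).\<close>
definition helper_nodes ::
  "'v set \<Rightarrow> ('v \<Rightarrow> 'v \<Rightarrow> bool) \<Rightarrow> nat \<Rightarrow> nat \<Rightarrow> ('v vnode \<Rightarrow> nat) \<Rightarrow> nat
     \<Rightarrow> ('v vnode \<times> 'v vnode set) set" where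
  "helper_nodes V E L l cls i =
     {(x, C). C \<in> components V E L l cls i \<and>
              (hv2 V E L l cls i C x \<or> hv1 V E L l cls i C x)}"

definition helper_edges ::
  "'v set \<Rightarrow> ('v \<Rightarrow> 'v \<Rightarrow> bool) \<Rightarrow> nat \<Rightarrow> nat \<Rightarrow> ('v vnode \<Rightarrow> nat) \<Rightarrow> nat
     \<Rightarrow> (('v vnode \<times> 'v vnode set) \<times> ('v vnode \<times> 'v vnode set)) set" where
  "helper_edges V E L l cls i =
     {((v, C), (w, C)) | v w C. C \<in> components V E L l cls i \<and>
                                hedge V E L l cls i C v w}"

text \<open>Local input of a real node u: its own identifier, the class i, and for
  every old neighbour x of its layer-l copies the tuple
  (identifier of Psi x, layer x, type x, class of x, component identifier of x).\<close>
type_synonym inp = "nat \<times> nat \<times> (nat \<times> nat \<times> nat \<times> nat \<times> nat) set"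

text \<open>History of a node: for each past round, the set of (sender id, message)
  pairs received from its neighbours in G.\<close>
type_synonym hist = "(nat \<times> nat) set list"

text \<open>Local output of a real node u: the helper nodes hosted by its layer-l
  copies, as pairs (type, component identifier), and the helper edges incident to
  them, as triples (type of own copy, component identifier, identifier of the
  real node hosting the other endpoint).\<close>
type_synonym outp = "(nat \<times> nat) set \<times> (nat \<times> nat \<times> nat) set"

primrec run ::
  "('v \<Rightarrow> 'v \<Rightarrow> bool) \<Rightarrow> ('v \<Rightarrow> nat) \<Rightarrow> ('v \<Rightarrow> inp) \<Rightarrow> (inp \<Rightarrow> hist \<Rightarrow> nat option)
     \<Rightarrow> nat \<Rightarrow> 'v \<Rightarrow> hist" where
  "run E ident I msg 0 = (\<lambda>u. [])"
| "run E ident I msg (Suc r) =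
     (\<lambda>u. run E ident I msg r u @
          [{(ident w, m) | w m. E u w \<and> msg (I w) (run E ident I msg r w) = Some m}])"

definition degree :: "'v set \<Rightarrow> ('v \<Rightarrow> 'v \<Rightarrow> bool) \<Rightarrow> 'v \<Rightarrow> nat" where
  "degree V E u = card {w \<in> V. E u w}"

definition max_degree :: "'v set \<Rightarrow> ('v \<Rightarrow> 'v \<Rightarrow> bool) \<Rightarrow> nat" where
  "max_degree V E = Max (insert 0 (degree V E ` V))"

definition local_input ::
  "'v set \<Rightarrow> ('v \<Rightarrow> 'v \<Rightarrow> bool) \<Rightarrow> nat \<Rightarrow> nat \<Rightarrow> ('v vnode \<Rightarrow> nat)
     \<Rightarrow> ('v vnode \<Rightarrow> nat) \<Rightarrow> ('v \<Rightarrow> nat) \<Rightarrow> nat \<Rightarrow> 'v \<Rightarrow> inp" where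
  "local_input V E L l cls cid ident i u =
     (ident u, i,
      {(ident (Psi x), layer x, vtype x, cls x, cid x) | x.
         x \<in> old V L l \<and> vadj E (u, l, 1) x})"

definition local_output ::
  "'v set \<Rightarrow> ('v \<Rightarrow> 'v \<Rightarrow> bool) \<Rightarrow> nat \<Rightarrow> nat \<Rightarrow> ('v vnode \<Rightarrow> nat)
     \<Rightarrow> ('v vnode \<Rightarrow> nat) \<Rightarrow> ('v \<Rightarrow> nat) \<Rightarrow> nat \<Rightarrow> 'v \<Rightarrow> outp" where
  "local_output V E L l cls cid ident i u =
     ({(k, c) | k c. \<exists>C x. ((u, l, k), C) \<in> helper_nodes V E L l cls i \<and>
                           x \<in> C \<and> cid x = c},
      {(2, c, ident (Psi w)) | c w. \<exists>C x.
           (((u, l, 2), C), (w, C)) \<in> helper_edges V E L l cls i \<and> x \<in> C \<and> cid x = c} \<union>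
      {(1, c, ident (Psi v)) | c v. \<exists>C x.
           ((v, C), ((u, l, 1), C)) \<in> helper_edges V E L l cls i \<and> x \<in> C \<and> cid x = c})"

end

theory Submission
  imports Defs
begin
lemma run_length: "length (run E ident I msg r u) = r"
  by (induction r arbitrary: u) auto

lemma run_Union: "\<Union>(set (run E ident I msg r u)) =
  {(ident w, m) | w m. E u w \<and> (\<exists>j<r. msg (I w) (run E ident I msg j w) = Some m)}"
proof (induction r arbitrary: u)
  case 0 then show ?case by auto
next
  case (Suc r)
  have "\<Union>(set (run E ident I msg (Suc r) u)) = \<Union>(set (run E ident I msg r u)) \<union>
     {(ident w, m) | w m. E u w \<and> msg (I w) (run E ident I msg r w) = Some m}" by (simp add: Un_commute)
  then show ?case unfolding Suc by (auto simp: less_Suc_eq)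
qed

definition Aof :: "inp \<Rightarrow> nat set" where
  "Aof p = {cd. \<exists>a b c. (a,b,c,fst (snd p), cd) \<in> snd (snd p)}"
definition flg :: "inp \<Rightarrow> nat \<Rightarrow> bool" where
  "flg p c = (\<exists>b t. (fst p, b, t, fst (snd p), c) \<in> snd (snd p))"
definition enc :: "inp \<Rightarrow> nat \<Rightarrow> nat" where
  "enc p c = 2 * c + (if flg p c then 1 else 0)"
definition msgf :: "inp \<Rightarrow> nat \<Rightarrow> nat option" where
  "msgf p j = (if j < card (Aof p) then Some (enc p (sorted_list_of_set (Aof p) ! j)) else None)"

lemma msgf_set:
  assumes "finite (Aof p)" "card (Aof p) \<le> r"
  shows "{m. \<exists>j<r. msgf p j = Some m} = enc p ` Aof p"
proof -
  have "{m. \<exists>j<r. msgf p j = Some m} = enc p ` {sorted_list_of_set (Aof p) ! j | j. j < card (Aof p)}"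
    using assms(2) unfolding msgf_def by (auto split: if_splits)
  also have "{sorted_list_of_set (Aof p) ! j | j. j < card (Aof p)} = Aof p"
  proof -
    have "set (sorted_list_of_set (Aof p)) = {sorted_list_of_set (Aof p) ! j | j. j < card (Aof p)}"
      by (simp only: set_conv_nth length_sorted_list_of_set)
    then show ?thesis using assms(1) by simp
  qed
  finally show ?thesis .
qed

lemma msgf_some: "msgf p j = Some m \<Longrightarrow> finite (Aof p) \<Longrightarrow> \<exists>c\<in>Aof p. m = enc p c"
  unfolding msgf_def
  by (metis length_sorted_list_of_set nth_mem option.distinct(1) option.inject set_sorted_list_of_set)

lemma enc_div: "enc p c div 2 = c" unfolding enc_def by auto
lemma enc_even: "enc p c = 2 * c' \<longleftrightarrow> c' = c \<and> \<not> flg p c" unfolding enc_def by (cases "flg p c") presburger+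

definition SAf :: "(nat \<times> nat) set \<Rightarrow> nat \<Rightarrow> nat set" where
  "SAf R s = {m div 2 | m. (s, m) \<in> R}"
definition sh2f :: "(nat \<times> nat) set \<Rightarrow> nat \<Rightarrow> nat \<Rightarrow> bool" where
  "sh2f R s c = (SAf R s = {c} \<and> (s, 2*c) \<in> R)"
definition outf :: "inp \<Rightarrow> hist \<Rightarrow> outp" where
  "outf p h =
   ({(2,c) | c. Aof p = {c} \<and> \<not> flg p c} \<union>
    {(1,c) | c. (\<exists>s. sh2f (\<Union>(set h)) s c) \<and> c \<notin> Aof p \<and> (\<exists>c'\<in>Aof p. c' \<noteq> c)},
    {(2,c,s) | c s. Aof p = {c} \<and> \<not> flg p c \<and> c \<notin> SAf (\<Union>(set h)) s \<and> (\<exists>c'\<in>SAf (\<Union>(set h)) s. c' \<noteq> c)} \<union>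
    {(1,c,s) | c s. sh2f (\<Union>(set h)) s c \<and> c \<notin> Aof p \<and> (\<exists>c'\<in>Aof p. c' \<noteq> c)})"

definition msgF :: "inp \<Rightarrow> hist \<Rightarrow> nat option" where "msgF p h = msgf p (length h)"

locale hsetup =
  fixes V :: "'v set" and E L l and i :: nat and cls :: "'v vnode \<Rightarrow> nat" and cid :: "'v vnode \<Rightarrow> nat"
    and ident :: "'v \<Rightarrow> nat"
  assumes fin: "finite V"
    and Esym: "\<forall>u w. E u w \<longrightarrow> u \<in> V \<and> w \<in> V \<and> u \<noteq> w \<and> E w u"
    and lL: "L < l" and l2: "l \<le> 2 * L"
    and cidh: "\<forall>x \<in> old V L l. \<forall>y \<in> old V L l. cls x = cls y \<longrightarrow>
          (cid x = cid y \<longleftrightarrow> y \<in> comp_in E (class_set V L l cls (cls x)) x)"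
    and inj: "inj_on ident V"
begin

abbreviation "S \<equiv> class_set V L l cls i"
definition A :: "'v \<Rightarrow> nat set" where "A u = cid ` {x\<in>S. vadj E (u,l,1) x}"
definition fl :: "'v \<Rightarrow> nat \<Rightarrow> bool" where "fl u c = (\<exists>x\<in>S. Psi x = u \<and> cid x = c)"
definition Cc :: "nat \<Rightarrow> 'v vnode set" where "Cc c = {y\<in>S. cid y = c}"
abbreviation "I \<equiv> local_input V E L l cls cid ident i"

lemma old_props: "x \<in> old V L l \<Longrightarrow> Psi x \<in> V \<and> layer x < l"
  unfolding old_def vnodes_def Psi_def by auto

lemma S_old: "x \<in> S \<Longrightarrow> x \<in> old V L l \<and> cls x = i"
  unfolding class_set_def by auto

lemma Aof_I: "Aof (I u) = A u"
  unfolding Aof_def local_input_def A_def class_set_def by force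

lemma flg_I: assumes "u \<in> V" shows "flg (I u) c = fl u c"
proof
  assume "flg (I u) c"
  then obtain x where x: "x \<in> old V L l" "ident (Psi x) = ident u" "cls x = i" "cid x = c"
    unfolding flg_def local_input_def by auto
  then have "Psi x = u" using old_props[OF x(1)] assms inj by (auto dest: inj_onD)
  moreover have "x \<in> S" using x(1,3) unfolding class_set_def by simp
  ultimately show "fl u c" using x unfolding fl_def by blast
next
  assume "fl u c"
  then obtain x where x: "x \<in> S" "Psi x = u" "cid x = c" unfolding fl_def by auto
  then have "vadj E (u,l,1) x" using old_props S_old unfolding vadj_def layer_def Psi_def
    by (metis fst_conv less_irrefl snd_conv)
  then have "(ident u, layer x, vtype x, i, c) \<in> snd (snd (I u))"
    using x S_old[OF x(1)] \<open>vadj E (u,l,1) x\<close> unfolding local_input_def snd_conv by blast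
  then show "flg (I u) c" unfolding flg_def by (auto simp: local_input_def)
qed

lemma comp_sub: assumes "x \<in> S" "y \<in> comp_in E S x" shows "y \<in> S"
proof -
  have "(x, y) \<in> {(a, b). a \<in> S \<and> b \<in> S \<and> vadj E a b}\<^sup>*" using assms(2) unfolding comp_in_def by simp
  then show ?thesis using assms(1) by (induction rule: rtrancl_induct) auto
qed

lemma comp_char: assumes "x \<in> S" shows "comp_in E S x = Cc (cid x)"
proof -
  have cs: "class_set V L l cls (cls x) = S" using S_old[OF assms] by simp
  have key: "y \<in> S \<Longrightarrow> (cid x = cid y \<longleftrightarrow> y \<in> comp_in E S x)" for y
    using cidh S_old[OF assms] S_old[of y] cs by metis
  show ?thesis
  proof (intro set_eqI iffI)
    fix y assume "y \<in> comp_in E S x"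
    then have "y \<in> S" using comp_sub[OF assms] by blast
    with key \<open>y \<in> comp_in E S x\<close> have "cid y = cid x" by metis
    with \<open>y \<in> S\<close> show "y \<in> Cc (cid x)" unfolding Cc_def by blast
  next
    fix y assume "y \<in> Cc (cid x)"
    then have "y \<in> S" "cid y = cid x" unfolding Cc_def by auto
    then show "y \<in> comp_in E S x" using key by metis
  qed
qed

lemma components_eq: "components V E L l cls i = Cc ` (cid ` S)"
  unfolding components_def using comp_char by (auto simp: image_image)

lemma Psi_cid: assumes "x \<in> S" "y \<in> S" "Psi x = Psi y" shows "cid x = cid y"
proof (cases "x = y")
  case False
  then have "y \<in> comp_in E S x" using assms unfolding comp_in_def vadj_def by auto
  then show ?thesis using comp_char[OF assms(1)] unfolding Cc_def by auto
qed simp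

lemma A_sub: "A u \<subseteq> cid ` S" unfolding A_def by auto

lemma vadj_l: assumes "layer v = l" "y \<in> old V L l"
  shows "vadj E v y \<longleftrightarrow> vadj E (Psi v, l, 1) y"
  using old_props[OF assms(2)] assms(1) unfolding vadj_def layer_def Psi_def by auto

lemma adj_Cc: assumes "layer v = l" shows "adj_to E v (Cc c) \<longleftrightarrow> c \<in> A (Psi v)"
  unfolding adj_to_def Cc_def A_def using vadj_l[OF assms] S_old by auto

lemma Cc_ne: "c \<in> cid ` S \<Longrightarrow> Cc c \<noteq> {}" unfolding Cc_def by auto

lemma Cc_inj: "c \<in> cid ` S \<Longrightarrow> Cc c = Cc c' \<Longrightarrow> c = c'" unfolding Cc_def by auto

lemma other_comp: assumes "layer w = l"
  shows "(\<exists>C'\<in>components V E L l cls i. C' \<noteq> Cc c \<and> adj_to E w C') \<longleftrightarrow> (\<exists>c'\<in>A (Psi w). c' \<noteq> c)"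
proof
  assume "\<exists>C'\<in>components V E L l cls i. C' \<noteq> Cc c \<and> adj_to E w C'"
  then obtain C' where C': "C' \<in> Cc ` (cid ` S)" "C' \<noteq> Cc c" "adj_to E w C'"
    unfolding components_eq by blast
  then obtain c' where c': "C' = Cc c'" by blast
  have "c' \<in> A (Psi w)" using C'(3) adj_Cc[OF assms] c' by simp
  moreover have "c' \<noteq> c" using C'(2) c' by blast
  ultimately show "\<exists>c'\<in>A (Psi w). c' \<noteq> c" by blast
next
  assume "\<exists>c'\<in>A (Psi w). c' \<noteq> c"
  then obtain c' where c': "c' \<in> A (Psi w)" "c' \<noteq> c" by blast
  then have cs: "c' \<in> cid ` S" using A_sub by blast
  have "Cc c' \<in> components V E L l cls i" unfolding components_eq using cs by blast
  moreover have "Cc c' \<noteq> Cc c" using Cc_inj[OF cs] c'(2) by blast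
  moreover have "adj_to E w (Cc c')" using adj_Cc[OF assms] c'(1) by simp
  ultimately show "\<exists>C'\<in>components V E L l cls i. C' \<noteq> Cc c \<and> adj_to E w C'" by blast
qed

lemma Psi_Cc: "Psi v \<in> Psi ` Cc c \<longleftrightarrow> fl (Psi v) c"
  unfolding fl_def Cc_def image_iff Bex_def mem_Collect_eq by metis

lemma hv2_char: "hv2 V E L l cls i (Cc c) v \<longleftrightarrow>
   v \<in> vnodes V L \<and> layer v = l \<and> vtype v = 2 \<and> A (Psi v) = {c} \<and> \<not> fl (Psi v) c"
  unfolding hv2_def using Psi_Cc[of v c] adj_Cc[of v c] other_comp[of v c] by auto

lemma vnodes_l: "v \<in> vnodes V L \<Longrightarrow> layer v = l \<Longrightarrow> vtype v = k \<Longrightarrow> v = (Psi v, l, k) \<and> Psi v \<in> V"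
  unfolding vnodes_def layer_def vtype_def Psi_def by auto

lemma vnodes_l2: "z \<in> V \<Longrightarrow> k \<in> {1,2} \<Longrightarrow> (z, l, k) \<in> vnodes V L"
  unfolding vnodes_def using lL l2 by auto

lemma Psi_t[simp]: "Psi (z,j,k) = z" and layer_t[simp]: "layer (z,j,k) = j" and vtype_t[simp]: "vtype (z,j,k) = k"
  by (simp_all add: Psi_def layer_def vtype_def)

lemma hedge_char: "hedge V E L l cls i (Cc c) v w \<longleftrightarrow>
   (\<exists>z u. v = (z,l,2) \<and> w = (u,l,1) \<and> z \<in> V \<and> u \<in> V \<and> E z u \<and> A z = {c} \<and> \<not> fl z c \<and>
      (\<exists>c'\<in>A u. c' \<noteq> c) \<and> c \<notin> A u)" (is "?L \<longleftrightarrow> ?R")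
proof
  assume h: ?L
  then have h2: "hv2 V E L l cls i (Cc c) v" and w0: "w \<in> vnodes V L" "layer w = l" "vtype w = 1"
    and vw: "vadj E v w" and oc: "\<exists>C' \<in> components V E L l cls i. C' \<noteq> Cc c \<and> adj_to E w C'"
    and na: "\<not> adj_to E w (Cc c)"
    unfolding hedge_def by blast+
  from h2 have v0: "v \<in> vnodes V L" "layer v = l" "vtype v = 2" "A (Psi v) = {c}" "\<not> fl (Psi v) c"
    unfolding hv2_char by blast+
  have v: "v = (Psi v, l, 2)" "Psi v \<in> V" using vnodes_l[OF v0(1,2,3)] by blast+
  have w: "w = (Psi w, l, 1)" "Psi w \<in> V" using vnodes_l[OF w0] by blast+
  have o1: "\<exists>c'\<in>A (Psi w). c' \<noteq> c" using oc other_comp[OF w0(2)] by blast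
  have o2: "c \<notin> A (Psi w)" using na adj_Cc[OF w0(2)] by blast
  have "Psi v \<noteq> Psi w" using v0(4) o2 by auto
  then have "E (Psi v) (Psi w)" using vw unfolding vadj_def by blast
  then show ?R using v w o1 o2 v0(4,5) by blast
next
  assume ?R
  then obtain z u where r: "v = (z,l,2)" "w = (u,l,1)" "z \<in> V" "u \<in> V" "E z u" "A z = {c}" "\<not> fl z c"
      "\<exists>c'\<in>A u. c' \<noteq> c" "c \<notin> A u" by blast
  have "hv2 V E L l cls i (Cc c) v" unfolding hv2_char using r vnodes_l2[of z 2] by simp
  moreover have "w \<in> vnodes V L" using r vnodes_l2[of u 1] by simp
  moreover have "vadj E v w" using r unfolding vadj_def by simp
  moreover have "\<exists>C' \<in> components V E L l cls i. C' \<noteq> Cc c \<and> adj_to E w C'"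
    using other_comp[of w c] r by simp
  moreover have "\<not> adj_to E w (Cc c)" using adj_Cc[of w c] r by simp
  ultimately show ?L unfolding hedge_def using r by simp
qed

end

context hsetup begin

lemma he_mem: "((a,C),(b,C)) \<in> helper_edges V E L l cls i \<longleftrightarrow>
   C \<in> components V E L l cls i \<and> hedge V E L l cls i C a b"
  unfolding helper_edges_def by blast

lemma hn_mem: "(a,C) \<in> helper_nodes V E L l cls i \<longleftrightarrow>
   C \<in> components V E L l cls i \<and> (hv2 V E L l cls i C a \<or> hv1 V E L l cls i C a)"
  unfolding helper_nodes_def by blast

lemma ex_comp: "(\<exists>C x. (C \<in> components V E L l cls i \<and> Q C) \<and> x \<in> C \<and> cid x = c) \<longleftrightarrow>
   (c \<in> cid ` S \<and> Q (Cc c))"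
proof
  assume "\<exists>C x. (C \<in> components V E L l cls i \<and> Q C) \<and> x \<in> C \<and> cid x = c"
  then obtain C x where C: "C \<in> Cc ` (cid ` S)" "Q C" "x \<in> C" "cid x = c"
    unfolding components_eq by blast
  then obtain c0 where c0: "c0 \<in> cid ` S" "C = Cc c0" by blast
  then have "c0 = c" using C(3,4) unfolding Cc_def by auto
  then show "c \<in> cid ` S \<and> Q (Cc c)" using c0 C by blast
next
  assume a: "c \<in> cid ` S \<and> Q (Cc c)"
  then obtain x where "x \<in> Cc c" using Cc_ne by blast
  moreover have "cid x = c" using calculation unfolding Cc_def by blast
  moreover have "Cc c \<in> components V E L l cls i" using a unfolding components_eq by blast
  ultimately show "\<exists>C x. (C \<in> components V E L l cls i \<and> Q C) \<and> x \<in> C \<and> cid x = c" using a by blast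
qed

lemma hv2_u: "u \<in> V \<Longrightarrow> hv2 V E L l cls i (Cc c) (u,l,k) \<longleftrightarrow> k = 2 \<and> A u = {c} \<and> \<not> fl u c"
  unfolding hv2_char using vnodes_l2[of u 2] by auto

lemma hv1_u: "hv1 V E L l cls i (Cc c) (u,l,k) \<longleftrightarrow>
   k = 1 \<and> (\<exists>z. E u z \<and> A z = {c} \<and> \<not> fl z c) \<and> c \<notin> A u \<and> (\<exists>c'\<in>A u. c' \<noteq> c) \<and> u \<in> V"
  unfolding hv1_def hedge_char using Esym by blast

lemma A_sub': "c \<in> A u \<Longrightarrow> c \<in> cid ` S" using A_sub by blast

end

lemma set_z: "{(k::nat, c::nat, f (Psi w)) |c w. \<exists>z. w = (z,l::nat,j::nat) \<and> P z c} = {(k,c,f z) | c z. P z c}"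
proof (rule set_eqI, rule iffI)
  fix p assume "p \<in> {(k::nat, c::nat, f (Psi w)) |c w. \<exists>z. w = (z,l::nat,j::nat) \<and> P z c}"
  then obtain c w z where "p = (k,c,f (Psi w))" "w = (z,l,j)" "P z c" by blast
  then show "p \<in> {(k,c,f z) | c z. P z c}" by (simp add: Psi_def) blast
next
  fix p assume "p \<in> {(k,c,f z) | c z. P z c}"
  then obtain c z where "p = (k,c,f z)" "P z c" by blast
  then have "p = (k, c, f (Psi (z,l,j))) \<and> (z,l,j) = (z,l,j) \<and> P z c" by (simp add: Psi_def)
  then show "p \<in> {(k::nat, c::nat, f (Psi w)) |c w. \<exists>z. w = (z,l::nat,j::nat) \<and> P z c}" by blast
qed
context hsetup begin
lemma lo_nodes: assumes "u \<in> V"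
  shows "fst (local_output V E L l cls cid ident i u) =
    {(2,c) | c. A u = {c} \<and> \<not> fl u c} \<union>
    {(1,c) | c. (\<exists>z. E u z \<and> A z = {c} \<and> \<not> fl z c) \<and> c \<notin> A u \<and> (\<exists>c'\<in>A u. c' \<noteq> c)}"
proof -
  have key: "(\<exists>C x. ((u, l, k), C) \<in> helper_nodes V E L l cls i \<and> x \<in> C \<and> cid x = c) \<longleftrightarrow>
        (k = 2 \<and> A u = {c} \<and> \<not> fl u c) \<or>
        (k = 1 \<and> (\<exists>z. E u z \<and> A z = {c} \<and> \<not> fl z c) \<and> c \<notin> A u \<and> (\<exists>c'\<in>A u. c' \<noteq> c))" for k c
  proof -
    have "(\<exists>C x. ((u, l, k), C) \<in> helper_nodes V E L l cls i \<and> x \<in> C \<and> cid x = c) \<longleftrightarrow>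
       c \<in> cid ` S \<and> (hv2 V E L l cls i (Cc c) (u,l,k) \<or> hv1 V E L l cls i (Cc c) (u,l,k))"
      unfolding hn_mem by (rule ex_comp)
    also have "\<dots> \<longleftrightarrow> c \<in> cid ` S \<and> ((k = 2 \<and> A u = {c} \<and> \<not> fl u c) \<or>
        (k = 1 \<and> (\<exists>z. E u z \<and> A z = {c} \<and> \<not> fl z c) \<and> c \<notin> A u \<and> (\<exists>c'\<in>A u. c' \<noteq> c)))"
      unfolding hv2_u[OF assms] hv1_u using assms by simp
    also have "\<dots> \<longleftrightarrow> (k = 2 \<and> A u = {c} \<and> \<not> fl u c) \<or>
        (k = 1 \<and> (\<exists>z. E u z \<and> A z = {c} \<and> \<not> fl z c) \<and> c \<notin> A u \<and> (\<exists>c'\<in>A u. c' \<noteq> c))"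
      using A_sub'[of c u] A_sub'[of c] by blast
    finally show ?thesis .
  qed
  have "fst (local_output V E L l cls cid ident i u) =
     {(k, c) |k c. \<exists>C x. ((u, l, k), C) \<in> helper_nodes V E L l cls i \<and> x \<in> C \<and> cid x = c}"
    unfolding local_output_def by simp
  also have "\<dots> = {(k, c) |k c. (k = 2 \<and> A u = {c} \<and> \<not> fl u c) \<or>
        (k = 1 \<and> (\<exists>z. E u z \<and> A z = {c} \<and> \<not> fl z c) \<and> c \<notin> A u \<and> (\<exists>c'\<in>A u. c' \<noteq> c))}"
    unfolding key ..
  also have "\<dots> = {(2,c) | c. A u = {c} \<and> \<not> fl u c} \<union>
    {(1,c) | c. (\<exists>z. E u z \<and> A z = {c} \<and> \<not> fl z c) \<and> c \<notin> A u \<and> (\<exists>c'\<in>A u. c' \<noteq> c)}" by blast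
  finally show ?thesis .
qed
lemma hedge_u2: assumes "u \<in> V" shows "hedge V E L l cls i (Cc c) (u,l,2) w \<longleftrightarrow>
  (\<exists>z. w = (z,l,1) \<and> E u z \<and> A u = {c} \<and> \<not> fl u c \<and> (\<exists>c'\<in>A z. c' \<noteq> c) \<and> c \<notin> A z)"
  unfolding hedge_char
proof
  assume "\<exists>z u'. (u, l, 2) = (z, l, 2) \<and> w = (u', l, 1) \<and> z \<in> V \<and> u' \<in> V \<and> E z u' \<and> A z = {c} \<and> \<not> fl z c \<and>
         (\<exists>c'\<in>A u'. c' \<noteq> c) \<and> c \<notin> A u'"
  then obtain z u' where h: "(u, l, 2) = (z, l, 2)" "w = (u', l, 1)" "E z u'" "A z = {c}" "\<not> fl z c"
      "\<exists>c'\<in>A u'. c' \<noteq> c" "c \<notin> A u'" by blast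
  from h(1) have "z = u" by simp
  then show "\<exists>z. w = (z,l,1) \<and> E u z \<and> A u = {c} \<and> \<not> fl u c \<and> (\<exists>c'\<in>A z. c' \<noteq> c) \<and> c \<notin> A z"
    using h by blast
next
  assume "\<exists>z. w = (z,l,1) \<and> E u z \<and> A u = {c} \<and> \<not> fl u c \<and> (\<exists>c'\<in>A z. c' \<noteq> c) \<and> c \<notin> A z"
  then obtain z where h: "w = (z,l,1)" "E u z" "A u = {c}" "\<not> fl u c" "\<exists>c'\<in>A z. c' \<noteq> c" "c \<notin> A z" by blast
  have "z \<in> V" using Esym h(2) by blast
  then show "\<exists>z u'. (u, l, 2) = (z, l, 2) \<and> w = (u', l, 1) \<and> z \<in> V \<and> u' \<in> V \<and> E z u' \<and> A z = {c} \<and> \<not> fl z c \<and>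
         (\<exists>c'\<in>A u'. c' \<noteq> c) \<and> c \<notin> A u'" using h assms by blast
qed

lemma hedge_u1: assumes "u \<in> V" shows "hedge V E L l cls i (Cc c) v (u,l,1) \<longleftrightarrow>
  (\<exists>z. v = (z,l,2) \<and> E z u \<and> A z = {c} \<and> \<not> fl z c \<and> (\<exists>c'\<in>A u. c' \<noteq> c) \<and> c \<notin> A u)"
  unfolding hedge_char
proof
  assume "\<exists>z u'. v = (z, l, 2) \<and> (u, l, 1) = (u', l, 1) \<and> z \<in> V \<and> u' \<in> V \<and> E z u' \<and> A z = {c} \<and> \<not> fl z c \<and>
         (\<exists>c'\<in>A u'. c' \<noteq> c) \<and> c \<notin> A u'"
  then obtain z u' where h: "(u, l, 1) = (u', l, 1)" "v = (z, l, 2)" "E z u'" "A z = {c}" "\<not> fl z c"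
      "\<exists>c'\<in>A u'. c' \<noteq> c" "c \<notin> A u'" by blast
  from h(1) have "u' = u" by simp
  then show "\<exists>z. v = (z,l,2) \<and> E z u \<and> A z = {c} \<and> \<not> fl z c \<and> (\<exists>c'\<in>A u. c' \<noteq> c) \<and> c \<notin> A u"
    using h by blast
next
  assume "\<exists>z. v = (z,l,2) \<and> E z u \<and> A z = {c} \<and> \<not> fl z c \<and> (\<exists>c'\<in>A u. c' \<noteq> c) \<and> c \<notin> A u"
  then obtain z where h: "v = (z,l,2)" "E z u" "A z = {c}" "\<not> fl z c" "\<exists>c'\<in>A u. c' \<noteq> c" "c \<notin> A u" by blast
  have "z \<in> V" using Esym h(2) by blast
  then show "\<exists>z u'. v = (z, l, 2) \<and> (u, l, 1) = (u', l, 1) \<and> z \<in> V \<and> u' \<in> V \<and> E z u' \<and> A z = {c} \<and> \<not> fl z c \<and>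
         (\<exists>c'\<in>A u'. c' \<noteq> c) \<and> c \<notin> A u'" using h assms by blast
qed

lemma lo_edges: assumes "u \<in> V"
  shows "snd (local_output V E L l cls cid ident i u) =
    {(2,c,ident w) | c w. E u w \<and> A u = {c} \<and> \<not> fl u c \<and> (\<exists>c'\<in>A w. c' \<noteq> c) \<and> c \<notin> A w} \<union>
    {(1,c,ident z) | c z. E z u \<and> A z = {c} \<and> \<not> fl z c \<and> (\<exists>c'\<in>A u. c' \<noteq> c) \<and> c \<notin> A u}"
proof -
  have e1: "(\<exists>C x. (((u, l, 2), C), (w, C)) \<in> helper_edges V E L l cls i \<and> x \<in> C \<and> cid x = c) \<longleftrightarrow>
     (\<exists>z. w = (z,l,1) \<and> E u z \<and> A u = {c} \<and> \<not> fl u c \<and> (\<exists>c'\<in>A z. c' \<noteq> c) \<and> c \<notin> A z)" for w c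
  proof -
    have "(\<exists>C x. (((u, l, 2), C), (w, C)) \<in> helper_edges V E L l cls i \<and> x \<in> C \<and> cid x = c) \<longleftrightarrow>
      c \<in> cid ` S \<and> hedge V E L l cls i (Cc c) (u,l,2) w"
      unfolding he_mem by (rule ex_comp)
    also have "\<dots> \<longleftrightarrow> c \<in> cid ` S \<and> (\<exists>z. w = (z,l,1) \<and> E u z \<and> A u = {c} \<and> \<not> fl u c \<and> (\<exists>c'\<in>A z. c' \<noteq> c) \<and> c \<notin> A z)"
      unfolding hedge_u2[OF assms] ..
    also have "\<dots> \<longleftrightarrow> (\<exists>z. w = (z,l,1) \<and> E u z \<and> A u = {c} \<and> \<not> fl u c \<and> (\<exists>c'\<in>A z. c' \<noteq> c) \<and> c \<notin> A z)"
      using A_sub'[of c u] by blast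
    finally show ?thesis .
  qed
  have e2: "(\<exists>C x. ((v, C), ((u, l, 1), C)) \<in> helper_edges V E L l cls i \<and> x \<in> C \<and> cid x = c) \<longleftrightarrow>
     (\<exists>z. v = (z,l,2) \<and> E z u \<and> A z = {c} \<and> \<not> fl z c \<and> (\<exists>c'\<in>A u. c' \<noteq> c) \<and> c \<notin> A u)" for v c
  proof -
    have "(\<exists>C x. ((v, C), ((u, l, 1), C)) \<in> helper_edges V E L l cls i \<and> x \<in> C \<and> cid x = c) \<longleftrightarrow>
      c \<in> cid ` S \<and> hedge V E L l cls i (Cc c) v (u,l,1)"
      unfolding he_mem by (rule ex_comp)
    also have "\<dots> \<longleftrightarrow> c \<in> cid ` S \<and> (\<exists>z. v = (z,l,2) \<and> E z u \<and> A z = {c} \<and> \<not> fl z c \<and> (\<exists>c'\<in>A u. c' \<noteq> c) \<and> c \<notin> A u)"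
      unfolding hedge_u1[OF assms] ..
    also have "\<dots> \<longleftrightarrow> (\<exists>z. v = (z,l,2) \<and> E z u \<and> A z = {c} \<and> \<not> fl z c \<and> (\<exists>c'\<in>A u. c' \<noteq> c) \<and> c \<notin> A u)"
      using A_sub' by blast
    finally show ?thesis .
  qed
  have "snd (local_output V E L l cls cid ident i u) =
    {(2, c, ident (Psi w)) |c w. \<exists>z. w = (z,l,1) \<and> E u z \<and> A u = {c} \<and> \<not> fl u c \<and> (\<exists>c'\<in>A z. c' \<noteq> c) \<and> c \<notin> A z} \<union>
    {(1, c, ident (Psi v)) |c v. \<exists>z. v = (z,l,2) \<and> E z u \<and> A z = {c} \<and> \<not> fl z c \<and> (\<exists>c'\<in>A u. c' \<noteq> c) \<and> c \<notin> A u}"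
    unfolding local_output_def snd_conv e1 e2 ..
  also have "\<dots> =
    {(2,c,ident w) | c w. E u w \<and> A u = {c} \<and> \<not> fl u c \<and> (\<exists>c'\<in>A w. c' \<noteq> c) \<and> c \<notin> A w} \<union>
    {(1,c,ident z) | c z. E z u \<and> A z = {c} \<and> \<not> fl z c \<and> (\<exists>c'\<in>A u. c' \<noteq> c) \<and> c \<notin> A u}"
    unfolding set_z[of 2 ident l 1 "\<lambda>z c. E u z \<and> A u = {c} \<and> \<not> fl u c \<and> (\<exists>c'\<in>A z. c' \<noteq> c) \<and> c \<notin> A z"]
      set_z[of 1 ident l 2 "\<lambda>z c. E z u \<and> A z = {c} \<and> \<not> fl z c \<and> (\<exists>c'\<in>A u. c' \<noteq> c) \<and> c \<notin> A u"] ..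
  finally show ?thesis .
qed
end

context hsetup begin
lemma A_card: assumes "w \<in> V" shows "finite (A w) \<and> card (A w) \<le> max_degree V E + 1"
proof -
  let ?Y = "{x\<in>S. vadj E (w,l,1) x}"
  define g where "g p = cid (SOME x. x \<in> ?Y \<and> Psi x = p)" for p
  have "g (Psi y) = cid y" if "y \<in> ?Y" for y
  proof -
    have "\<exists>x. x \<in> ?Y \<and> Psi x = Psi y" using that by blast
    then have "(SOME x. x \<in> ?Y \<and> Psi x = Psi y) \<in> ?Y \<and> Psi (SOME x. x \<in> ?Y \<and> Psi x = Psi y) = Psi y"
      by (rule someI_ex)
    then show ?thesis unfolding g_def using Psi_cid that by blast
  qed
  then have Aeq: "A w = g ` (Psi ` ?Y)" unfolding A_def by (auto simp: image_image)
  have sub: "Psi ` ?Y \<subseteq> insert w {z \<in> V. E w z}"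
  proof
    fix p assume "p \<in> Psi ` ?Y"
    then obtain x where x: "x \<in> S" "vadj E (w,l,1) x" "p = Psi x" by blast
    then have "Psi x = w \<or> E w (Psi x)" unfolding vadj_def Psi_t by blast
    moreover have "Psi x \<in> V" using old_props S_old x(1) by blast
    ultimately show "p \<in> insert w {z \<in> V. E w z}" using x(3) by blast
  qed
  have fV: "finite {z \<in> V. E w z}" using fin by simp
  have fY: "finite (Psi ` ?Y)" using sub fV by (meson finite_insert finite_subset)
  have "card (A w) \<le> card (Psi ` ?Y)" unfolding Aeq by (rule card_image_le[OF fY])
  also have "\<dots> \<le> card (insert w {z \<in> V. E w z})" by (rule card_mono[OF _ sub]) (simp add: fV)
  also have "\<dots> \<le> degree V E w + 1" unfolding degree_def by (simp add: card_insert_if fV)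
  finally have c1: "card (A w) \<le> degree V E w + 1" .
  have "degree V E w \<le> max_degree V E" unfolding max_degree_def
    using fin assms by (intro Max_ge) auto
  with c1 have "card (A w) \<le> max_degree V E + 1" by simp
  moreover have "finite (A w)" unfolding Aeq using fY by blast
  ultimately show ?thesis by blast
qed

end

lemma div_set: "{m div 2 | m. \<exists>c\<in>X. m = enc p c} = X"
proof (intro set_eqI iffI)
  fix x assume "x \<in> {m div 2 | m. \<exists>c\<in>X. m = enc p c}"
  then obtain c where "c \<in> X" "x = enc p c div 2" by blast
  then show "x \<in> X" by (simp add: enc_div)
next
  fix x assume x: "x \<in> X"
  have "x = enc p x div 2" by (simp add: enc_div)
  then show "x \<in> {m div 2 | m. \<exists>c\<in>X. m = enc p c}" using x by blast
qed

context hsetup begin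

lemma R_char: assumes "max_degree V E + 1 \<le> r"
  shows "\<Union>(set (run E ident I msgF r u)) = {(ident w, enc (I w) c) | w c. E u w \<and> c \<in> A w}"
proof -
  have m: "msgF (I w) (run E ident I msgF j w) = msgf (I w) j" for w j
    unfolding msgF_def run_length ..
  have s: "{m. \<exists>j<r. msgf (I w) j = Some m} = enc (I w) ` A w" if "E u w" for w
  proof -
    have "w \<in> V" using Esym that by blast
    then show ?thesis using msgf_set[of "I w" r] A_card[of w] assms unfolding Aof_I by simp
  qed
  have "\<Union>(set (run E ident I msgF r u)) = {(ident w, m) | w m. E u w \<and> (\<exists>j<r. msgf (I w) j = Some m)}"
    unfolding run_Union m ..
  also have "\<dots> = {(ident w, m) | w m. E u w \<and> m \<in> enc (I w) ` A w}"
    using s by blast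
  also have "\<dots> = {(ident w, enc (I w) c) | w c. E u w \<and> c \<in> A w}" by blast
  finally show ?thesis .
qed

lemma identeq: "E u w \<Longrightarrow> E u w' \<Longrightarrow> ident w = ident w' \<Longrightarrow> w = w'"
  using Esym inj by (meson inj_onD)

context
  fixes u R assumes uV: "u \<in> V" and R: "R = {(ident w, enc (I w) c) | w c. E u w \<and> c \<in> A w}"
begin

lemma Rmem: "(ident w, m) \<in> R \<longleftrightarrow> E u w \<and> (\<exists>c\<in>A w. m = enc (I w) c)" if "E u w"
  unfolding R using identeq that by blast

lemma Rsnd: "(s, m) \<in> R \<Longrightarrow> \<exists>w. E u w \<and> s = ident w" unfolding R by blast

lemma SA_w: "E u w \<Longrightarrow> SAf R (ident w) = A w"
proof -
  assume e: "E u w"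
  have "SAf R (ident w) = {m div 2 | m. \<exists>c\<in>A w. m = enc (I w) c}"
    unfolding SAf_def using Rmem[OF e] e by simp
  also have "\<dots> = A w" by (rule div_set)
  finally show ?thesis .
qed

lemma SA_ne: "SAf R s \<noteq> {} \<Longrightarrow> \<exists>w. E u w \<and> s = ident w"
  unfolding SAf_def using Rsnd by blast

lemma R2: "(s, 2*c) \<in> R \<longleftrightarrow> (\<exists>w. E u w \<and> s = ident w \<and> c \<in> A w \<and> \<not> fl w c)"
proof
  assume "(s, 2*c) \<in> R"
  then obtain w where w: "E u w" "s = ident w" using Rsnd by blast
  then obtain c0 where "c0 \<in> A w" "2*c = enc (I w) c0" using Rmem \<open>(s, 2*c) \<in> R\<close> by blast
  moreover have "w \<in> V" using Esym w by blast
  ultimately show "\<exists>w. E u w \<and> s = ident w \<and> c \<in> A w \<and> \<not> fl w c"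
    using w enc_even[of "I w" c0 c] flg_I by metis
next
  assume "\<exists>w. E u w \<and> s = ident w \<and> c \<in> A w \<and> \<not> fl w c"
  then obtain w where w: "E u w" "s = ident w" "c \<in> A w" "\<not> fl w c" by blast
  moreover have "w \<in> V" using Esym w by blast
  ultimately have "2*c = enc (I w) c" using enc_even flg_I by metis
  then show "(s, 2*c) \<in> R" using w Rmem by metis
qed

lemma sh2_iff: "sh2f R s c \<longleftrightarrow> (\<exists>z. E u z \<and> s = ident z \<and> A z = {c} \<and> \<not> fl z c)"
  unfolding sh2f_def R2 using SA_w by auto

lemma SA_iff: "(c \<notin> SAf R s \<and> (\<exists>c'\<in>SAf R s. c' \<noteq> c)) \<longleftrightarrow>
   (\<exists>w. E u w \<and> s = ident w \<and> c \<notin> A w \<and> (\<exists>c'\<in>A w. c' \<noteq> c))"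
proof
  assume a: "c \<notin> SAf R s \<and> (\<exists>c'\<in>SAf R s. c' \<noteq> c)"
  then obtain w where "E u w" "s = ident w" using SA_ne by blast
  then show "\<exists>w. E u w \<and> s = ident w \<and> c \<notin> A w \<and> (\<exists>c'\<in>A w. c' \<noteq> c)" using a SA_w by metis
next
  assume "\<exists>w. E u w \<and> s = ident w \<and> c \<notin> A w \<and> (\<exists>c'\<in>A w. c' \<noteq> c)"
  then show "c \<notin> SAf R s \<and> (\<exists>c'\<in>SAf R s. c' \<noteq> c)" using SA_w by metis
qed

lemma out_ok: assumes "\<Union>(set h) = R"
  shows "outf (I u) h = local_output V E L l cls cid ident i u"
proof -
  have fl': "flg (I u) c = fl u c" for c using flg_I[OF uV] .
  have o: "outf (I u) h =
   ({(2,c) | c. A u = {c} \<and> \<not> fl u c} \<union>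
    {(1,c) | c. (\<exists>s z. E u z \<and> s = ident z \<and> A z = {c} \<and> \<not> fl z c) \<and> c \<notin> A u \<and> (\<exists>c'\<in>A u. c' \<noteq> c)},
    {(2,c,s) | c s. A u = {c} \<and> \<not> fl u c \<and> (\<exists>w. E u w \<and> s = ident w \<and> c \<notin> A w \<and> (\<exists>c'\<in>A w. c' \<noteq> c))} \<union>
    {(1,c,s) | c s. (\<exists>z. E u z \<and> s = ident z \<and> A z = {c} \<and> \<not> fl z c) \<and> c \<notin> A u \<and> (\<exists>c'\<in>A u. c' \<noteq> c)})"
    unfolding outf_def assms Aof_I fl' sh2_iff SA_iff ..
  have "fst (outf (I u) h) = fst (local_output V E L l cls cid ident i u)"
    unfolding o lo_nodes[OF uV] fst_conv by blast
  moreover have "snd (outf (I u) h) = snd (local_output V E L l cls cid ident i u)"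
    unfolding o lo_edges[OF uV] snd_conv using Esym by blast
  ultimately show ?thesis by (simp add: prod_eq_iff)
qed

end
end

lemma enc_le: "enc p c \<le> 2 * c + 1" unfolding enc_def by simp

theorem lemma5:
  "\<forall>k::nat. \<exists>(msg :: inp \<Rightarrow> hist \<Rightarrow> nat option) (out :: inp \<Rightarrow> hist \<Rightarrow> outp) (c::nat).
     \<forall>(V :: 'v set) (E :: 'v \<Rightarrow> 'v \<Rightarrow> bool) (L::nat) (l::nat) (t::nat) (i::nat)
       (cls :: 'v vnode \<Rightarrow> nat) (cid :: 'v vnode \<Rightarrow> nat) (ident :: 'v \<Rightarrow> nat).
       finite V \<and>
       (\<forall>u w. E u w \<longrightarrow> u \<in> V \<and> w \<in> V \<and> u \<noteq> w \<and> E w u) \<and>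
       L < l \<and> l \<le> 2 * L \<and> 1 \<le> i \<and> i \<le> t \<and>
       (\<forall>x \<in> old V L l. 1 \<le> cls x \<and> cls x \<le> t) \<and>
       (\<forall>x \<in> old V L l. \<forall>y \<in> old V L l. cls x = cls y \<longrightarrow>
          (cid x = cid y \<longleftrightarrow> y \<in> comp_in E (class_set V L l cls (cls x)) x)) \<and>
       inj_on ident V \<and>
       t < (card V + 2) ^ k \<and>
       (\<forall>u \<in> V. ident u < (card V + 2) ^ k) \<and>
       (\<forall>x \<in> old V L l. cid x < (card V + 2) ^ k)
     \<longrightarrow>
       (let I = local_input V E L l cls cid ident i in
        (\<forall>r. \<forall>u \<in> V. \<forall>m. msg (I u) (run E ident I msg r u) = Some m
               \<longrightarrow> m < (card V + 2) ^ c) \<and>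
        (\<forall>r \<ge> c * (max_degree V E + 1). \<forall>u \<in> V.
           out (I u) (run E ident I msg r u) = local_output V E L l cls cid ident i u))"
proof (rule allI)
  fix k :: nat
  show "\<exists>(msg :: inp \<Rightarrow> hist \<Rightarrow> nat option) (out :: inp \<Rightarrow> hist \<Rightarrow> outp) (c::nat).
     \<forall>(V :: 'v set) (E :: 'v \<Rightarrow> 'v \<Rightarrow> bool) (L::nat) (l::nat) (t::nat) (i::nat)
       (cls :: 'v vnode \<Rightarrow> nat) (cid :: 'v vnode \<Rightarrow> nat) (ident :: 'v \<Rightarrow> nat).
       finite V \<and>
       (\<forall>u w. E u w \<longrightarrow> u \<in> V \<and> w \<in> V \<and> u \<noteq> w \<and> E w u) \<and>
       L < l \<and> l \<le> 2 * L \<and> 1 \<le> i \<and> i \<le> t \<and>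
       (\<forall>x \<in> old V L l. 1 \<le> cls x \<and> cls x \<le> t) \<and>
       (\<forall>x \<in> old V L l. \<forall>y \<in> old V L l. cls x = cls y \<longrightarrow>
          (cid x = cid y \<longleftrightarrow> y \<in> comp_in E (class_set V L l cls (cls x)) x)) \<and>
       inj_on ident V \<and>
       t < (card V + 2) ^ k \<and>
       (\<forall>u \<in> V. ident u < (card V + 2) ^ k) \<and>
       (\<forall>x \<in> old V L l. cid x < (card V + 2) ^ k)
     \<longrightarrow>
       (let I = local_input V E L l cls cid ident i in
        (\<forall>r. \<forall>u \<in> V. \<forall>m. msg (I u) (run E ident I msg r u) = Some m
               \<longrightarrow> m < (card V + 2) ^ c) \<and>
        (\<forall>r \<ge> c * (max_degree V E + 1). \<forall>u \<in> V.
           out (I u) (run E ident I msg r u) = local_output V E L l cls cid ident i u))"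
  proof (intro exI[of _ msgF] exI[of _ outf] exI[of _ "Suc k"] allI impI)
  fix V :: "'v set" and E :: "'v \<Rightarrow> 'v \<Rightarrow> bool" and L l t i :: nat and cls cid :: "'v vnode \<Rightarrow> nat" and ident :: "'v \<Rightarrow> nat"
  assume H: "finite V \<and>
       (\<forall>u w. E u w \<longrightarrow> u \<in> V \<and> w \<in> V \<and> u \<noteq> w \<and> E w u) \<and>
       L < l \<and> l \<le> 2 * L \<and> 1 \<le> i \<and> i \<le> t \<and>
       (\<forall>x \<in> old V L l. 1 \<le> cls x \<and> cls x \<le> t) \<and>
       (\<forall>x \<in> old V L l. \<forall>y \<in> old V L l. cls x = cls y \<longrightarrow>
          (cid x = cid y \<longleftrightarrow> y \<in> comp_in E (class_set V L l cls (cls x)) x)) \<and>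
       inj_on ident V \<and>
       t < (card V + 2) ^ k \<and>
       (\<forall>u \<in> V. ident u < (card V + 2) ^ k) \<and>
       (\<forall>x \<in> old V L l. cid x < (card V + 2) ^ k)"
  interpret hsetup V E L l i cls cid ident
    using H by unfold_locales (elim conjE; assumption)+
  let ?N = "(card V + 2) ^ k"
  have cidb: "\<forall>x \<in> old V L l. cid x < ?N" using H by (elim conjE)
  show "let I = local_input V E L l cls cid ident i in
        (\<forall>r. \<forall>u \<in> V. \<forall>m. msgF (I u) (run E ident I msgF r u) = Some m
               \<longrightarrow> m < (card V + 2) ^ Suc k) \<and>
        (\<forall>r \<ge> Suc k * (max_degree V E + 1). \<forall>u \<in> V.
           outf (I u) (run E ident I msgF r u) = local_output V E L l cls cid ident i u)"
    unfolding Let_def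
  proof (intro conjI allI ballI impI)
    fix r u m assume u: "u \<in> V" and m: "msgF (I u) (run E ident I msgF r u) = Some m"
    have "finite (Aof (I u))" using A_card[OF u] unfolding Aof_I by blast
    from msgf_some[OF m[unfolded msgF_def] this] obtain c where c: "c \<in> A u" "m = enc (I u) c"
      unfolding Aof_I by blast
    then obtain x where "x \<in> S" "c = cid x" unfolding A_def by blast
    then have "c < ?N" using cidb S_old[OF \<open>x \<in> S\<close>] by blast
    then have "m < 2 * ?N" using c(2) enc_le[of "I u" c] by linarith
    also have "\<dots> \<le> (card V + 2) * ?N" by (intro mult_right_mono) simp_all
    finally show "m < (card V + 2) ^ Suc k" by simp
  next
    fix r u assume r: "Suc k * (max_degree V E + 1) \<le> r" and u: "u \<in> V"
    have "max_degree V E + 1 \<le> Suc k * (max_degree V E + 1)" by simp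
    then have "max_degree V E + 1 \<le> r" using r by (rule le_trans)
    from R_char[OF this, of u] show "outf (I u) (run E ident I msgF r u) = local_output V E L l cls cid ident i u"
      by (rule out_ok[OF u refl])
  qed
  qed
qed

end
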